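(* Let $R$ be an associative ring with anti-involution $a\mapsto\bar a$. Define $\tilde N:=\tilde N_e^{C_2}i_e^*(\underline R^{\mathrm{fix}})$ by $\tilde N(C_2/e)=R\otimes R^{\mathrm{op}}$ with Weyl action $a\otimes b\mapsto\bar b\otimes\bar a$, and $\tilde N(C_2/C_2)=(\mathbb Z\{R\}\oplus(R\otimes R^{\mathrm{op}})/C_2)/\mathrm{TR}$, where TR identifies $\{a+b\}\sim\{a\}+\{b\}+[a\otimes\bar b]$. With restriction $\mathrm{res}\{a\}=a\otimes\bar a$, $\mathrm{res}[a\otimes b]=a\otimes b+\bar b\otimes\bar a$, transfer $\mathrm{tr}(a\otimes b)=[a\otimes b]$, the usual ring structure on $R\otimes R^{\mathrm{op}}$ at $C_2/e$, and multiplication at $C_2/C_2$ given by \[\{a\}\{b\}=\{ab\},\quad\{a\}[b\otimes c]=[ab\otimes c\bar a],\quad[a\otimes b]\{c\}=[ac\otimes\bar cb],\quad[a\otimes b][c\otimes d]=[ac\otimes db]+[a\bar d\otimes\bar cb],\] and unit sending $1\in\underline A(C_2/C_2)=\mathbb Z[t]/(t^2-2t)$ to $\{1\}$, $t$ to $[1\otimes1]$, and $1\in\underline A(C_2/e)=\mathbb Z$ to $1\otimes1$, $\tilde N$ is a well-defined $C_2$-Mackey functor and an associative $C_2$-Green functor.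
   Context: $C_2=\{e,\tau\}$. A $C_2$-Mackey functor consists of abelian groups at $C_2/C_2$ and $C_2/e$, an involution (Weyl action) on the $C_2/e$-level, restriction $\mathrm{res}$ into the invariants and transfer $\mathrm{tr}$ with $\mathrm{tr}(\tau x)=\mathrm{tr}(x)$ and $\mathrm{res}\,\mathrm{tr}(x)=x+\tau x$. An associative $C_2$-Green functor is a monoid for the box product, i.e. associative unital rings at both levels such that $\mathrm{res}$ is a ring map, the Weyl action is by ring maps, and Frobenius reciprocity $\mathrm{tr}(x)y=\mathrm{tr}(x\,\mathrm{res}(y))$, $y\,\mathrm{tr}(x)=\mathrm{tr}(\mathrm{res}(y)x)$ holds. $\underline A$ is the $C_2$-Burnside Mackey functor, the unit for the box product. An anti-involution satisfies $\bar{\bar a}=a$, $\overline{ab}=\bar b\bar a$, $\overline{a+b}=\bar a+\bar b$. $\mathbb Z\{R\}$ is the free abelian group on symbols $\{a\}$, $a\in R$, and $[a\otimes b]$ denotes the class of $a\otimes b$ in the $C_2$-coinvariants of $R\otimes R^{\mathrm{op}}$. *)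

theory Defs
  imports Main "HOL-Library.Poly_Mapping"
begin

text \<open>Each level of the functor is presented as a quotient G/K of an abelian group G
(here: a free abelian group of formal integer combinations) by a subgroup K.
The structure maps (Weyl action, restriction, transfer, products) are given on
representatives by additive (resp. biadditive) maps.  "Well-defined" means that
they preserve the relation subgroups; all axioms are then required to hold in
the quotients, i.e. modulo the relation subgroups.\<close>

definition add_subgroup :: "'a::ab_group_add set \<Rightarrow> bool" where
  "add_subgroup K \<longleftrightarrow> 0 \<in> K \<and> (\<forall>x\<in>K. \<forall>y\<in>K. x - y \<in> K)"

definition additive :: "('a::ab_group_add \<Rightarrow> 'b::ab_group_add) \<Rightarrow> bool" where
  "additive f \<longleftrightarrow> (\<forall>x y. f (x + y) = f x + f y)"

definition biadditive :: "('a::ab_group_add \<Rightarrow> 'b::ab_group_add \<Rightarrow> 'c::ab_group_add) \<Rightarrow> bool" where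
  "biadditive m \<longleftrightarrow> (\<forall>x. additive (m x)) \<and> (\<forall>y. additive (\<lambda>x. m x y))"

definition c2_mackey_pres ::
  "'t::ab_group_add set \<Rightarrow> 'e::ab_group_add set \<Rightarrow> ('e \<Rightarrow> 'e) \<Rightarrow> ('t \<Rightarrow> 'e) \<Rightarrow> ('e \<Rightarrow> 't) \<Rightarrow> bool" where
  "c2_mackey_pres KT KE w res tr \<longleftrightarrow>
     add_subgroup KT \<and> add_subgroup KE \<and>
     additive w \<and> additive res \<and> additive tr \<and>
     \<comment> \<open>well-definedness on the quotients\<close>
     w ` KE \<subseteq> KE \<and> res ` KT \<subseteq> KE \<and> tr ` KE \<subseteq> KT \<and>
     \<comment> \<open>w is an involution\<close>
     (\<forall>x. w (w x) - x \<in> KE) \<and>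
     \<comment> \<open>restriction lands in the invariants\<close>
     (\<forall>y. w (res y) - res y \<in> KE) \<and>
     \<comment> \<open>tr (\<tau> x) = tr x\<close>
     (\<forall>x. tr (w x) - tr x \<in> KT) \<and>
     \<comment> \<open>res (tr x) = x + \<tau> x\<close>
     (\<forall>x. res (tr x) - (x + w x) \<in> KE)"

definition c2_green_pres ::
  "'t::ab_group_add set \<Rightarrow> 'e::ab_group_add set \<Rightarrow> ('e \<Rightarrow> 'e) \<Rightarrow> ('t \<Rightarrow> 'e) \<Rightarrow> ('e \<Rightarrow> 't)
   \<Rightarrow> ('t \<Rightarrow> 't \<Rightarrow> 't) \<Rightarrow> ('e \<Rightarrow> 'e \<Rightarrow> 'e) \<Rightarrow> 't \<Rightarrow> 'e \<Rightarrow> bool" where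
  "c2_green_pres KT KE w res tr mT mE uT uE \<longleftrightarrow>
     c2_mackey_pres KT KE w res tr \<and>
     biadditive mT \<and> biadditive mE \<and>
     \<comment> \<open>well-definedness of the products on the quotients\<close>
     (\<forall>x\<in>KT. \<forall>y. mT x y \<in> KT \<and> mT y x \<in> KT) \<and>
     (\<forall>x\<in>KE. \<forall>y. mE x y \<in> KE \<and> mE y x \<in> KE) \<and>
     \<comment> \<open>associative unital rings\<close>
     (\<forall>x y z. mT (mT x y) z - mT x (mT y z) \<in> KT) \<and>
     (\<forall>x. mT uT x - x \<in> KT \<and> mT x uT - x \<in> KT) \<and>
     (\<forall>x y z. mE (mE x y) z - mE x (mE y z) \<in> KE) \<and>
     (\<forall>x. mE uE x - x \<in> KE \<and> mE x uE - x \<in> KE) \<and>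
     \<comment> \<open>res is a ring map\<close>
     (\<forall>x y. res (mT x y) - mE (res x) (res y) \<in> KE) \<and> res uT - uE \<in> KE \<and>
     \<comment> \<open>the Weyl action is by ring maps\<close>
     (\<forall>x y. w (mE x y) - mE (w x) (w y) \<in> KE) \<and> w uE - uE \<in> KE \<and>
     \<comment> \<open>Frobenius reciprocity\<close>
     (\<forall>x y. mT (tr x) y - tr (mE x (res y)) \<in> KT) \<and>
     (\<forall>x y. mT y (tr x) - tr (mE (res y) x) \<in> KT)"

definition anti_involution :: "('a::ring_1 \<Rightarrow> 'a) \<Rightarrow> bool" where
  "anti_involution bar \<longleftrightarrow> (\<forall>a. bar (bar a) = a) \<and> (\<forall>a b. bar (a * b) = bar b * bar a)
     \<and> (\<forall>a b. bar (a + b) = bar a + bar b)"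

inductive_set gen_subgroup :: "'a::ab_group_add set \<Rightarrow> 'a set" for S where
  gen_zero: "0 \<in> gen_subgroup S"
| gen_base: "x \<in> S \<Longrightarrow> x \<in> gen_subgroup S"
| gen_diff: "x \<in> gen_subgroup S \<Longrightarrow> y \<in> gen_subgroup S \<Longrightarrow> x - y \<in> gen_subgroup S"

text \<open>Bottom level: R \<otimes> R^op = free abelian group on pairs (a,b) (symbol a\<otimes>b) modulo
bilinearity (tensor product over \<int>).\<close>
definition tens_rels :: "(('a::ring_1 \<times> 'a) \<Rightarrow>\<^sub>0 int) set" where
  "tens_rels = {frag_of (a + a', b) - frag_of (a, b) - frag_of (a', b) | a a' b. True}
             \<union> {frag_of (a, b + b') - frag_of (a, b) - frag_of (a, b') | a b b'. True}"

definition KE :: "(('a::ring_1 \<times> 'a) \<Rightarrow>\<^sub>0 int) set" where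
  "KE = gen_subgroup tens_rels"

text \<open>Top level generators: {a} (Br a) and [a\<otimes>b] (Sq a b).\<close>
datatype 'a topgen = Br 'a | Sq 'a 'a

text \<open>Top level: (\<int>{R} \<oplus> (R\<otimes>R^op)/C2)/TR.  Relations: bilinearity of [-\<otimes>-],
C2-coinvariance [a\<otimes>b] = [b\<bar> \<otimes> a\<bar>] (Weyl action a\<otimes>b \<mapsto> bbar\<otimes>abar), and
TR: {a+b} = {a} + {b} + [a \<otimes> bbar].\<close>
definition top_rels :: "('a::ring_1 \<Rightarrow> 'a) \<Rightarrow> ('a topgen \<Rightarrow>\<^sub>0 int) set" where
  "top_rels bar =
       {frag_of (Sq (a + a') b) - frag_of (Sq a b) - frag_of (Sq a' b) | a a' b. True}
     \<union> {frag_of (Sq a (b + b')) - frag_of (Sq a b) - frag_of (Sq a b') | a b b'. True}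
     \<union> {frag_of (Sq a b) - frag_of (Sq (bar b) (bar a)) | a b. True}
     \<union> {frag_of (Br (a + b)) - frag_of (Br a) - frag_of (Br b) - frag_of (Sq a (bar b)) | a b. True}"

definition KT :: "('a::ring_1 \<Rightarrow> 'a) \<Rightarrow> ('a topgen \<Rightarrow>\<^sub>0 int) set" where
  "KT bar = gen_subgroup (top_rels bar)"

definition weylN :: "('a::ring_1 \<Rightarrow> 'a) \<Rightarrow> (('a \<times> 'a) \<Rightarrow>\<^sub>0 int) \<Rightarrow> (('a \<times> 'a) \<Rightarrow>\<^sub>0 int)" where
  "weylN bar = frag_extend (\<lambda>(a, b). frag_of (bar b, bar a))"

definition resN :: "('a::ring_1 \<Rightarrow> 'a) \<Rightarrow> ('a topgen \<Rightarrow>\<^sub>0 int) \<Rightarrow> (('a \<times> 'a) \<Rightarrow>\<^sub>0 int)" where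
  "resN bar = frag_extend (\<lambda>g. case g of
        Br a \<Rightarrow> frag_of (a, bar a)
      | Sq a b \<Rightarrow> frag_of (a, b) + frag_of (bar b, bar a))"

definition trN :: "(('a::ring_1 \<times> 'a) \<Rightarrow>\<^sub>0 int) \<Rightarrow> ('a topgen \<Rightarrow>\<^sub>0 int)" where
  "trN = frag_extend (\<lambda>(a, b). frag_of (Sq a b))"

definition mulE :: "(('a::ring_1 \<times> 'a) \<Rightarrow>\<^sub>0 int) \<Rightarrow> (('a \<times> 'a) \<Rightarrow>\<^sub>0 int) \<Rightarrow> (('a \<times> 'a) \<Rightarrow>\<^sub>0 int)" where
  "mulE x y = frag_extend (\<lambda>(a, b). frag_extend (\<lambda>(c, d). frag_of (a * c, d * b)) y) x"

fun topgen_mul :: "('a::ring_1 \<Rightarrow> 'a) \<Rightarrow> 'a topgen \<Rightarrow> 'a topgen \<Rightarrow> ('a topgen \<Rightarrow>\<^sub>0 int)" where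
  "topgen_mul bar (Br a) (Br b) = frag_of (Br (a * b))"
| "topgen_mul bar (Br a) (Sq b c) = frag_of (Sq (a * b) (c * bar a))"
| "topgen_mul bar (Sq a b) (Br c) = frag_of (Sq (a * c) (bar c * b))"
| "topgen_mul bar (Sq a b) (Sq c d) = frag_of (Sq (a * c) (d * b)) + frag_of (Sq (a * bar d) (bar c * b))"

definition mulT :: "('a::ring_1 \<Rightarrow> 'a) \<Rightarrow> ('a topgen \<Rightarrow>\<^sub>0 int) \<Rightarrow> ('a topgen \<Rightarrow>\<^sub>0 int) \<Rightarrow> ('a topgen \<Rightarrow>\<^sub>0 int)" where
  "mulT bar x y = frag_extend (\<lambda>g. frag_extend (\<lambda>h. topgen_mul bar g h) y) x"

text \<open>Units (images of 1 under the unit map from the Burnside functor).\<close>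
definition unitT :: "('a::ring_1 topgen \<Rightarrow>\<^sub>0 int)" where "unitT = frag_of (Br 1)"
definition unitE :: "(('a::ring_1 \<times> 'a) \<Rightarrow>\<^sub>0 int)" where "unitE = frag_of (1, 1)"

end

theory Submission imports Defs begin


lemma additive_0: "additive f \<Longrightarrow> f 0 = 0"
  unfolding additive_def by (metis add_cancel_right_right add_0)
lemma additive_diff: "additive f \<Longrightarrow> f (x - y) = f x - f y"
  unfolding additive_def by (metis add_diff_cancel diff_add_cancel)
lemma additive_frag_extend: "additive (frag_extend h)"
  unfolding additive_def by (simp add: frag_extend_add)
lemma additive_comp: "additive f \<Longrightarrow> additive g \<Longrightarrow> additive (\<lambda>x. f (g x))"
  unfolding additive_def by simp
lemma additive_sub: "additive f \<Longrightarrow> additive g \<Longrightarrow> additive (\<lambda>x. f x - g x)"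
  unfolding additive_def by (simp add: algebra_simps)
lemma additive_add: "additive f \<Longrightarrow> additive g \<Longrightarrow> additive (\<lambda>x. f x + g x)"
  unfolding additive_def by (simp add: algebra_simps)

lemma gen_subgroup_sub: "add_subgroup (gen_subgroup S)"
  unfolding add_subgroup_def by (auto intro: gen_subgroup.intros)
lemma gen_add: "x \<in> gen_subgroup S \<Longrightarrow> y \<in> gen_subgroup S \<Longrightarrow> x + y \<in> gen_subgroup S"
  by (metis diff_minus_eq_add diff_0 gen_diff gen_zero)
lemma gen_neg: "x \<in> gen_subgroup S \<Longrightarrow> - x \<in> gen_subgroup S"
  by (metis diff_0 gen_diff gen_zero)

lemma sub_diff: "add_subgroup K \<Longrightarrow> x \<in> K \<Longrightarrow> y \<in> K \<Longrightarrow> x - y \<in> K"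
  unfolding add_subgroup_def by blast
lemma sub_zero: "add_subgroup K \<Longrightarrow> 0 \<in> K"
  unfolding add_subgroup_def by blast

lemma gen_map: assumes "additive f" "add_subgroup K" "f ` S \<subseteq> K" "x \<in> gen_subgroup S"
  shows "f x \<in> K"
  using assms(4)
proof induction
  case gen_zero then show ?case using assms additive_0 sub_zero by metis
next
  case (gen_base x) then show ?case using assms by blast
next
  case (gen_diff x y) then show ?case using assms additive_diff sub_diff by metis
qed

lemma frag_gen: assumes "additive f" "add_subgroup K" "\<And>a. f (frag_of a) \<in> K"
  shows "f x \<in> K"
proof -
  have "Poly_Mapping.keys x \<subseteq> UNIV" by simp
  then show ?thesis
  proof (induction x rule: frag_induction)
    case zero then show ?case using assms additive_0 sub_zero by metis
  next
    case (one x) then show ?case using assms by blast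
  next
    case (diff a b) then show ?case using assms additive_diff sub_diff by metis
  qed
qed

lemma frag_eq: assumes "additive f" "additive g" "\<And>a. f (frag_of a) = g (frag_of a)"
  shows "f x = g x"
proof -
  have "Poly_Mapping.keys x \<subseteq> UNIV" by simp
  then show ?thesis
  proof (induction x rule: frag_induction)
    case zero then show ?case using assms additive_0 by metis
  next
    case (one x) then show ?case using assms by blast
  next
    case (diff a b) then show ?case using assms additive_diff by metis
  qed
qed

lemma mulT_of: "mulT bar (frag_of g) y = frag_extend (topgen_mul bar g) y"
  by (simp add: mulT_def)
lemma mulE_of: "mulE (frag_of g) y = frag_extend (\<lambda>(c, d). frag_of (fst g * c, d * snd g)) y"
  by (simp add: mulE_def split_def)

lemma additive_mulT1: "additive (\<lambda>x. mulT bar x y)"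
  unfolding mulT_def by (rule additive_frag_extend)
lemma additive_mulE1: "additive (\<lambda>x. mulE x y)"
  unfolding mulE_def by (rule additive_frag_extend)
lemma additive_mulT2: "additive (mulT bar x)"
proof -
  have "mulT bar x (y + z) = mulT bar x y + mulT bar x z" for y z
  proof -
    have "(\<lambda>x. mulT bar x (y + z)) x = (\<lambda>x. mulT bar x y + mulT bar x z) x"
      by (rule frag_eq) (auto intro: additive_add additive_mulT1 simp: mulT_of frag_extend_add)
    then show ?thesis by simp
  qed
  then show ?thesis unfolding additive_def by blast
qed
lemma additive_mulE2: "additive (mulE x)"
proof -
  have "mulE x (y + z) = mulE x y + mulE x z" for y z
  proof -
    have "(\<lambda>x. mulE x (y + z)) x = (\<lambda>x. mulE x y + mulE x z) x"
      by (rule frag_eq) (auto intro: additive_add additive_mulE1 simp: mulE_of frag_extend_add)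
    then show ?thesis by simp
  qed
  then show ?thesis unfolding additive_def by blast
qed

lemma biadd_mulT: "biadditive (mulT bar)"
  unfolding biadditive_def using additive_mulT1 additive_mulT2 by blast
lemma biadd_mulE: "biadditive mulE"
  unfolding biadditive_def using additive_mulE1 additive_mulE2 by blast

lemma additive_weyl: "additive (weylN bar)" unfolding weylN_def by (rule additive_frag_extend)
lemma additive_res: "additive (resN bar)" unfolding resN_def by (rule additive_frag_extend)
lemma additive_tr: "additive trN" unfolding trN_def by (rule additive_frag_extend)

lemma KT_sub: "add_subgroup (KT bar)" unfolding KT_def by (rule gen_subgroup_sub)
lemma KE_sub: "add_subgroup KE" unfolding KE_def by (rule gen_subgroup_sub)




lemma bi_mem: assumes "\<And>y. additive (\<lambda>x. F x y)" "\<And>x. additive (F x)" "add_subgroup K"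
  "\<And>a b. F (frag_of a) (frag_of b) \<in> K" shows "F x y \<in> K"
proof (rule frag_gen[where f="\<lambda>x. F x y", OF assms(1) assms(3)])
  fix a show "F (frag_of a) y \<in> K" by (rule frag_gen[OF assms(2) assms(3) assms(4)])
qed

lemma sub0: "add_subgroup {0::'a::ab_group_add}" by (simp add: add_subgroup_def)

lemma bi_eq: assumes "\<And>y. additive (\<lambda>x. F x y)" "\<And>x. additive (F x)"
  "\<And>y. additive (\<lambda>x. G x y)" "\<And>x. additive (G x)"
  "\<And>a b. F (frag_of a) (frag_of b) = G (frag_of a) (frag_of b)" shows "F x y = G x y"
proof -
  have "(\<lambda>x y. F x y - G x y) x y \<in> {0}"
    by (rule bi_mem) (auto intro: additive_sub assms sub0)
  then show ?thesis by simp
qed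

lemma tri_eq: assumes "\<And>y z. additive (\<lambda>x. F x y z)" "\<And>x z. additive (\<lambda>y. F x y z)" "\<And>x y. additive (F x y)"
  "\<And>y z. additive (\<lambda>x. G x y z)" "\<And>x z. additive (\<lambda>y. G x y z)" "\<And>x y. additive (G x y)"
  "\<And>a b c. F (frag_of a) (frag_of b) (frag_of c) = G (frag_of a) (frag_of b) (frag_of c)" shows "F x y z = G x y z"
proof (rule frag_eq[where f="\<lambda>x. F x y z" and g="\<lambda>x. G x y z", OF assms(1) assms(4)])
  fix a show "F (frag_of a) y z = G (frag_of a) y z"
    by (rule bi_eq[where F="F (frag_of a)" and G="G (frag_of a)"]) (auto intro: assms)
qed

locale ainv =
  fixes bar :: "'a::ring_1 \<Rightarrow> 'a"
  assumes ai: "anti_involution bar"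
begin

lemma bar_bar[simp]: "bar (bar a) = a" using ai unfolding anti_involution_def by blast
lemma bar_mult[simp]: "bar (a * b) = bar b * bar a" using ai unfolding anti_involution_def by blast
lemma bar_add[simp]: "bar (a + b) = bar a + bar b" using ai unfolding anti_involution_def by blast
lemma bar_one[simp]: "bar 1 = 1"
  by (metis bar_bar bar_mult mult.right_neutral mult_1)
lemma bar_zero[simp]: "bar 0 = 0"
  by (metis add_cancel_right_right bar_add)

abbreviation "KTb \<equiv> KT bar"

lemma KT_add: "x \<in> KTb \<Longrightarrow> y \<in> KTb \<Longrightarrow> x + y \<in> KTb" unfolding KT_def by (rule gen_add)
lemma KT_diff: "x \<in> KTb \<Longrightarrow> y \<in> KTb \<Longrightarrow> x - y \<in> KTb" unfolding KT_def by (rule gen_diff)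
lemma KT_neg: "x \<in> KTb \<Longrightarrow> - x \<in> KTb" unfolding KT_def by (rule gen_neg)
lemma KT_0: "0 \<in> KTb" unfolding KT_def by (rule gen_zero)

lemma KT_sqL: "frag_of (Sq (a + a') b) - frag_of (Sq a b) - frag_of (Sq a' b) \<in> KTb"
  unfolding KT_def by (rule gen_base) (unfold top_rels_def, blast)
lemma KT_sqR: "frag_of (Sq a (b + b')) - frag_of (Sq a b) - frag_of (Sq a b') \<in> KTb"
  unfolding KT_def by (rule gen_base) (unfold top_rels_def, blast)
lemma KT_co: "frag_of (Sq a b) - frag_of (Sq (bar b) (bar a)) \<in> KTb"
  unfolding KT_def by (rule gen_base) (unfold top_rels_def, blast)
lemma KT_tr: "frag_of (Br (a + b)) - frag_of (Br a) - frag_of (Br b) - frag_of (Sq a (bar b)) \<in> KTb"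
  unfolding KT_def by (rule gen_base) (unfold top_rels_def, blast)

lemma KE_add: "x \<in> KE \<Longrightarrow> y \<in> KE \<Longrightarrow> x + y \<in> KE" unfolding KE_def by (rule gen_add)
lemma KE_diff: "x \<in> KE \<Longrightarrow> y \<in> KE \<Longrightarrow> x - y \<in> KE" unfolding KE_def by (rule gen_diff)
lemma KE_0: "0 \<in> KE" unfolding KE_def by (rule gen_zero)
lemma KE_L: "frag_of (a + a', b) - frag_of (a, b) - frag_of (a', b) \<in> KE"
  unfolding KE_def by (rule gen_base) (unfold tens_rels_def, blast)
lemma KE_R: "frag_of (a, b + b') - frag_of (a, b) - frag_of (a, b') \<in> KE"
  unfolding KE_def by (rule gen_base) (unfold tens_rels_def, blast)

lemma KE_4: "frag_of (a + b, c + d) - frag_of (a, c) - frag_of (a, d) - frag_of (b, c) - frag_of (b, d) \<in> KE"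
proof -
  have "frag_of (a + b, c + d) - frag_of (a, c) - frag_of (a, d) - frag_of (b, c) - frag_of (b, d)
    = (frag_of (a + b, c + d) - frag_of (a, c + d) - frag_of (b, c + d))
      + (frag_of (a, c + d) - frag_of (a, c) - frag_of (a, d))
      + (frag_of (b, c + d) - frag_of (b, c) - frag_of (b, d))" by (simp add: algebra_simps)
  then show ?thesis by (metis KE_L KE_R KE_add)
qed

lemma KT_4: "frag_of (Sq (a + b) (c + d)) - frag_of (Sq a c) - frag_of (Sq a d) - frag_of (Sq b c) - frag_of (Sq b d) \<in> KTb"
proof -
  have "frag_of (Sq (a + b) (c + d)) - frag_of (Sq a c) - frag_of (Sq a d) - frag_of (Sq b c) - frag_of (Sq b d)
    = (frag_of (Sq (a + b) (c + d)) - frag_of (Sq a (c + d)) - frag_of (Sq b (c + d)))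
      + (frag_of (Sq a (c + d)) - frag_of (Sq a c) - frag_of (Sq a d))
      + (frag_of (Sq b (c + d)) - frag_of (Sq b c) - frag_of (Sq b d))" by (simp add: algebra_simps)
  then show ?thesis by (metis KT_sqL KT_sqR KT_add)
qed

lemma weyl_KE: "weylN bar ` KE \<subseteq> KE"
proof -
  have "weylN bar ` tens_rels \<subseteq> KE"
    by (auto simp: tens_rels_def weylN_def frag_extend_diff KE_L KE_R)
  then show ?thesis 
    using gen_map[OF additive_weyl KE_sub] by (metis KE_def image_subsetI)
qed


lemma res_r1: "resN bar (frag_of (Sq (a+a') b) - frag_of (Sq a b) - frag_of (Sq a' b)) \<in> KE"
proof -
  have "resN bar (frag_of (Sq (a+a') b) - frag_of (Sq a b) - frag_of (Sq a' b)) = (frag_of (a+a', b) - frag_of (a,b) - frag_of (a',b)) + (frag_of (bar b, bar a + bar a') - frag_of (bar b, bar a) - frag_of (bar b, bar a'))"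
    by (simp add: resN_def frag_extend_diff frag_extend_add algebra_simps)
  then show ?thesis by (metis KE_add KE_L KE_R)
qed
lemma res_r2: "resN bar (frag_of (Sq a (b+b')) - frag_of (Sq a b) - frag_of (Sq a b')) \<in> KE"
proof -
  have "resN bar (frag_of (Sq a (b+b')) - frag_of (Sq a b) - frag_of (Sq a b')) = (frag_of (a, b+b') - frag_of (a,b) - frag_of (a,b')) + (frag_of (bar b + bar b', bar a) - frag_of (bar b, bar a) - frag_of (bar b', bar a))"
    by (simp add: resN_def frag_extend_diff frag_extend_add algebra_simps)
  then show ?thesis by (metis KE_add KE_L KE_R)
qed
lemma res_r3: "resN bar (frag_of (Sq a b) - frag_of (Sq (bar b) (bar a))) \<in> KE"
  by (simp add: resN_def frag_extend_diff KE_0)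
lemma res_r4: "resN bar (frag_of (Br (a + b)) - frag_of (Br a) - frag_of (Br b) - frag_of (Sq a (bar b))) \<in> KE"
proof -
  have "resN bar (frag_of (Br (a + b)) - frag_of (Br a) - frag_of (Br b) - frag_of (Sq a (bar b))) =
    frag_of (a + b, bar a + bar b) - frag_of (a, bar a) - frag_of (a, bar b) - frag_of (b, bar a) - frag_of (b, bar b)"
    by (simp add: resN_def frag_extend_diff frag_extend_add algebra_simps)
  then show ?thesis by (metis KE_4)
qed

lemma res_KT: "resN bar ` KTb \<subseteq> KE"
proof -
  have "resN bar ` top_rels bar \<subseteq> KE"
    unfolding top_rels_def using res_r1 res_r2 res_r3 res_r4 by blast
  then show ?thesis unfolding KT_def
    using gen_map[OF additive_res KE_sub] by (metis image_subsetI)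
qed

lemma tr_KE: "trN ` KE \<subseteq> KTb"
proof -
  have "trN ` tens_rels \<subseteq> KTb"
    by (auto simp: tens_rels_def trN_def frag_extend_diff KT_sqL KT_sqR)
  then show ?thesis unfolding KE_def
    using gen_map[OF additive_tr KT_sub] by (metis image_subsetI)
qed

lemma additive_id: "additive (\<lambda>x. x)" by (simp add: additive_def)

lemma weyl_inv: "weylN bar (weylN bar x) - x \<in> KE"
proof -
  have "(\<lambda>x. weylN bar (weylN bar x)) x = (\<lambda>x. x) x"
  proof (rule frag_eq)
    fix g :: "'a \<times> 'a" show "weylN bar (weylN bar (frag_of g)) = frag_of g"
      by (cases g) (simp add: weylN_def)
  qed (rule additive_comp[OF additive_weyl additive_weyl], rule additive_id)
  then show ?thesis by (simp add: KE_0)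
qed

lemma res_inv: "weylN bar (resN bar y) - resN bar y \<in> KE"
proof -
  have "(\<lambda>x. weylN bar (resN bar x)) y = resN bar y"
  proof (rule frag_eq[where f="\<lambda>x. weylN bar (resN bar x)" and g="resN bar"])
    fix g show "weylN bar (resN bar (frag_of g)) = resN bar (frag_of g)"
      by (cases g) (simp_all add: weylN_def resN_def frag_extend_add add.commute)
  qed (rule additive_comp[OF additive_weyl additive_res], rule additive_res)
  then show ?thesis by (simp add: KE_0)
qed

lemma tr_weyl: "trN (weylN bar x) - trN x \<in> KTb"
proof (rule frag_gen[where f="\<lambda>x. trN (weylN bar x) - trN x"])
  fix g :: "'a \<times> 'a" show "trN (weylN bar (frag_of g)) - trN (frag_of g) \<in> KTb"
    using KT_neg[OF KT_co[of "fst g" "snd g"]] by (cases g) (simp add: weylN_def trN_def)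
qed (rule additive_sub[OF additive_comp[OF additive_tr additive_weyl] additive_tr], rule KT_sub)

lemma res_tr: "resN bar (trN x) - (x + weylN bar x) \<in> KE"
proof -
  have "(\<lambda>x. resN bar (trN x)) x = (\<lambda>x. x + weylN bar x) x"
  proof (rule frag_eq[where f="\<lambda>x. resN bar (trN x)" and g="\<lambda>x. x + weylN bar x"])
    fix g :: "'a \<times> 'a" show "resN bar (trN (frag_of g)) = frag_of g + weylN bar (frag_of g)"
      by (cases g) (simp add: weylN_def resN_def trN_def)
  qed (rule additive_comp[OF additive_res additive_tr], rule additive_add[OF additive_id additive_weyl])
  then show ?thesis by (simp add: KE_0)
qed

lemma mackey: "c2_mackey_pres KTb KE (weylN bar) (resN bar) trN"
  unfolding c2_mackey_pres_def
  using KT_sub KE_sub additive_weyl additive_res additive_tr weyl_KE res_KT tr_KE weyl_inv res_inv tr_weyl res_tr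
  by blast


lemma KT_eqI: "R \<in> KTb \<Longrightarrow> X = R \<Longrightarrow> X \<in> KTb" by simp
lemma KE_eqI: "R \<in> KE \<Longrightarrow> X = R \<Longrightarrow> X \<in> KE" by simp

abbreviation "r1 a a' b \<equiv> frag_of (Sq (a+a') b) - frag_of (Sq a b) - frag_of (Sq a' b)"
abbreviation "r2 a b b' \<equiv> frag_of (Sq a (b+b')) - frag_of (Sq a b) - frag_of (Sq a b')"
abbreviation "r3 a b \<equiv> frag_of (Sq a b) - frag_of (Sq (bar b) (bar a))"
abbreviation "r4 a b \<equiv> frag_of (Br (a + b)) - frag_of (Br a) - frag_of (Br b) - frag_of (Sq a (bar b))"

lemma w1a: "mulT bar (r1 a a' b) (frag_of (Br c)) \<in> KTb"
  by (rule KT_eqI[OF KT_sqL[of "a*c" "a'*c" "bar c * b"]]) (simp add: mulT_def frag_extend_diff frag_extend_add algebra_simps)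
lemma w1b: "mulT bar (r1 a a' b) (frag_of (Sq c d)) \<in> KTb"
  by (rule KT_eqI[OF KT_add[OF KT_sqL[of "a*c" "a'*c" "d * b"] KT_sqL[of "a*bar d" "a'*bar d" "bar c * b"]]]) (simp add: mulT_def frag_extend_diff frag_extend_add algebra_simps)
lemma w1c: "mulT bar (frag_of (Br c)) (r1 a a' b) \<in> KTb"
  by (rule KT_eqI[OF KT_sqL[of "c*a" "c*a'" "b * bar c"]]) (simp add: mulT_def frag_extend_diff frag_extend_add algebra_simps)
lemma w1d: "mulT bar (frag_of (Sq c d)) (r1 a a' b) \<in> KTb"
  by (rule KT_eqI[OF KT_add[OF KT_sqL[of "c*a" "c*a'" "b * d"] KT_sqR[of "c * bar b" "bar a * d" "bar a' * d"]]]) (simp add: mulT_def frag_extend_diff frag_extend_add algebra_simps)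

lemma w2a: "mulT bar (r2 a b b') (frag_of (Br c)) \<in> KTb"
  by (rule KT_eqI[OF KT_sqR[of "a*c" "bar c * b" "bar c * b'"]]) (simp add: mulT_def frag_extend_diff frag_extend_add algebra_simps)
lemma w2b: "mulT bar (r2 a b b') (frag_of (Sq c d)) \<in> KTb"
  by (rule KT_eqI[OF KT_add[OF KT_sqR[of "a*c" "d*b" "d * b'"] KT_sqR[of "a*bar d" "bar c * b" "bar c * b'"]]]) (simp add: mulT_def frag_extend_diff frag_extend_add algebra_simps)
lemma w2c: "mulT bar (frag_of (Br c)) (r2 a b b') \<in> KTb"
  by (rule KT_eqI[OF KT_sqR[of "c*a" "b * bar c" "b' * bar c"]]) (simp add: mulT_def frag_extend_diff frag_extend_add algebra_simps)
lemma w2d: "mulT bar (frag_of (Sq c d)) (r2 a b b') \<in> KTb"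
  by (rule KT_eqI[OF KT_add[OF KT_sqR[of "c*a" "b * d" "b' * d"] KT_sqL[of "c * bar b" "c * bar b'" "bar a * d"]]]) (simp add: mulT_def frag_extend_diff frag_extend_add algebra_simps)

lemma w3a: "mulT bar (r3 a b) (frag_of (Br c)) \<in> KTb"
  by (rule KT_eqI[OF KT_co[of "a*c" "bar c * b"]]) (simp add: mulT_def frag_extend_diff frag_extend_add algebra_simps)
lemma w3b: "mulT bar (r3 a b) (frag_of (Sq c d)) \<in> KTb"
  by (rule KT_eqI[OF KT_add[OF KT_co[of "a*c" "d*b"] KT_co[of "a*bar d" "bar c * b"]]]) (simp add: mulT_def frag_extend_diff frag_extend_add algebra_simps)
lemma w3c: "mulT bar (frag_of (Br c)) (r3 a b) \<in> KTb"
  by (rule KT_eqI[OF KT_co[of "c*a" "b * bar c"]]) (simp add: mulT_def frag_extend_diff frag_extend_add algebra_simps)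
lemma w3d: "mulT bar (frag_of (Sq c d)) (r3 a b) \<in> KTb"
  by (rule KT_eqI[OF KT_0]) (simp add: mulT_def frag_extend_diff frag_extend_add algebra_simps)

lemma w4a: "mulT bar (r4 a b) (frag_of (Br c)) \<in> KTb"
  by (rule KT_eqI[OF KT_tr[of "a*c" "b*c"]]) (simp add: mulT_def frag_extend_diff frag_extend_add algebra_simps)
lemma w4b: "mulT bar (r4 a b) (frag_of (Sq c d)) \<in> KTb"
  by (rule KT_eqI[OF KT_add[OF KT_4[of "a*c" "b*c" "d * bar a" "d * bar b"] KT_co[of "b*c" "d * bar a"]]]) (simp add: mulT_def frag_extend_diff frag_extend_add algebra_simps)
lemma w4c: "mulT bar (frag_of (Br c)) (r4 a b) \<in> KTb"
  by (rule KT_eqI[OF KT_tr[of "c*a" "c*b"]]) (simp add: mulT_def frag_extend_diff frag_extend_add algebra_simps)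
lemma w4d: "mulT bar (frag_of (Sq c d)) (r4 a b) \<in> KTb"
  by (rule KT_eqI[OF KT_4[of "c*a" "c*b" "bar a * d" "bar b * d"]]) (simp add: mulT_def frag_extend_diff frag_extend_add algebra_simps)

lemma wd_rels: assumes "r \<in> top_rels bar" shows "mulT bar r (frag_of h) \<in> KTb \<and> mulT bar (frag_of h) r \<in> KTb"
proof -
  from assms have "(\<exists>a a' b. r = r1 a a' b) \<or> (\<exists>a b b'. r = r2 a b b') \<or> (\<exists> a b. r = r3 a b) \<or> (\<exists>a b. r = r4 a b)"
    unfolding top_rels_def by blast
  then show ?thesis
    by (elim disjE exE; cases h) (simp_all only: w1a w1b w1c w1d w2a w2b w2c w2d w3a w3b w3c w3d w4a w4b w4c w4d simp_thms)
qed

lemma mulT_wd: "x \<in> KTb \<Longrightarrow> mulT bar x y \<in> KTb \<and> mulT bar y x \<in> KTb"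
proof
  assume x: "x \<in> KTb"
  show "mulT bar x y \<in> KTb"
  proof (rule gen_map[where f="\<lambda>x. mulT bar x y" and S="top_rels bar", OF additive_mulT1 KT_sub _ x[unfolded KT_def]])
    show "(\<lambda>x. mulT bar x y) ` top_rels bar \<subseteq> KTb"
    proof
      fix z assume "z \<in> (\<lambda>x. mulT bar x y) ` top_rels bar"
      then obtain r where r: "r \<in> top_rels bar" "z = mulT bar r y" by blast
      have "mulT bar r y \<in> KTb"
        by (rule frag_gen[OF additive_mulT2 KT_sub]) (use wd_rels[OF r(1)] in blast)
      then show "z \<in> KTb" using r by simp
    qed
  qed
  show "mulT bar y x \<in> KTb"
  proof (rule gen_map[where f="\<lambda>x. mulT bar y x" and S="top_rels bar", OF additive_mulT2 KT_sub _ x[unfolded KT_def]])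
    show "(\<lambda>x. mulT bar y x) ` top_rels bar \<subseteq> KTb"
    proof
      fix z assume "z \<in> (\<lambda>x. mulT bar y x) ` top_rels bar"
      then obtain r where r: "r \<in> top_rels bar" "z = mulT bar y r" by blast
      have "mulT bar y r \<in> KTb"
        by (rule frag_gen[where f="\<lambda>y. mulT bar y r", OF additive_mulT1 KT_sub]) (use wd_rels[OF r(1)] in blast)
      then show "z \<in> KTb" using r by simp
    qed
  qed
qed

lemma e1a: "mulE (frag_of (a + a', b) - frag_of (a, b) - frag_of (a', b)) (frag_of (c, d)) \<in> KE"
  by (rule KE_eqI[OF KE_L[of "a*c" "a'*c" "d*b"]]) (simp add: mulE_def frag_extend_diff frag_extend_add algebra_simps)
lemma e1b: "mulE (frag_of (c, d)) (frag_of (a + a', b) - frag_of (a, b) - frag_of (a', b)) \<in> KE"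
  by (rule KE_eqI[OF KE_L[of "c*a" "c*a'" "b*d"]]) (simp add: mulE_def frag_extend_diff frag_extend_add algebra_simps)
lemma e2a: "mulE (frag_of (a, b + b') - frag_of (a, b) - frag_of (a, b')) (frag_of (c, d)) \<in> KE"
  by (rule KE_eqI[OF KE_R[of "a*c" "d*b" "d*b'"]]) (simp add: mulE_def frag_extend_diff frag_extend_add algebra_simps)
lemma e2b: "mulE (frag_of (c, d)) (frag_of (a, b + b') - frag_of (a, b) - frag_of (a, b')) \<in> KE"
  by (rule KE_eqI[OF KE_R[of "c*a" "b*d" "b'*d"]]) (simp add: mulE_def frag_extend_diff frag_extend_add algebra_simps)

lemma wdE_rels: assumes "r \<in> tens_rels" shows "mulE r (frag_of h) \<in> KE \<and> mulE (frag_of h) r \<in> KE"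
proof -
  from assms have "(\<exists>a a' b. r = frag_of (a + a', b) - frag_of (a, b) - frag_of (a', b)) \<or> (\<exists>a b b'. r = frag_of (a, b + b') - frag_of (a, b) - frag_of (a, b'))"
    unfolding tens_rels_def by blast
  then show ?thesis
    by (elim disjE exE; cases h) (simp_all only: e1a e1b e2a e2b simp_thms)
qed

lemma mulE_wd: "x \<in> KE \<Longrightarrow> mulE x y \<in> KE \<and> mulE y x \<in> KE"
proof
  assume x: "x \<in> KE"
  show "mulE x y \<in> KE"
  proof (rule gen_map[where f="\<lambda>x. mulE x y" and S="tens_rels", OF additive_mulE1 KE_sub _ x[unfolded KE_def]])
    show "(\<lambda>x. mulE x y) ` tens_rels \<subseteq> KE"
    proof
      fix z assume "z \<in> (\<lambda>x. mulE x y) ` tens_rels"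
      then obtain r where r: "r \<in> tens_rels" "z = mulE r y" by blast
      have "mulE r y \<in> KE"
        by (rule frag_gen[OF additive_mulE2 KE_sub]) (use wdE_rels[OF r(1)] in blast)
      then show "z \<in> KE" using r by simp
    qed
  qed
  show "mulE y x \<in> KE"
  proof (rule gen_map[where f="\<lambda>x. mulE y x" and S="tens_rels", OF additive_mulE2 KE_sub _ x[unfolded KE_def]])
    show "(\<lambda>x. mulE y x) ` tens_rels \<subseteq> KE"
    proof
      fix z assume "z \<in> (\<lambda>x. mulE y x) ` tens_rels"
      then obtain r where r: "r \<in> tens_rels" "z = mulE y r" by blast
      have "mulE y r \<in> KE"
        by (rule frag_gen[where f="\<lambda>y. mulE y r", OF additive_mulE1 KE_sub]) (use wdE_rels[OF r(1)] in blast)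
      then show "z \<in> KE" using r by simp
    qed
  qed
qed


lemma mulT_of_of: "mulT bar (frag_of g) (frag_of h) = topgen_mul bar g h" by (simp add: mulT_def)

lemma assocT_gen: "mulT bar (topgen_mul bar g h) (frag_of k) = mulT bar (frag_of g) (topgen_mul bar h k)"
  by (cases g; cases h; cases k) (simp_all add: mulT_def mulE_def resN_def trN_def weylN_def unitT_def unitE_def frag_extend_add algebra_simps)

lemma assocT: "mulT bar (mulT bar x y) z = mulT bar x (mulT bar y z)"
  by (rule tri_eq[where F="\<lambda>x y z. mulT bar (mulT bar x y) z" and G="\<lambda>x y z. mulT bar x (mulT bar y z)"])
     (auto intro: additive_mulT1 additive_mulT2 additive_comp[OF additive_mulT1 additive_mulT1]
        additive_comp[OF additive_mulT1 additive_mulT2] additive_comp[OF additive_mulT2 additive_mulT1]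
        additive_comp[OF additive_mulT2 additive_mulT2] simp: mulT_of_of assocT_gen)

lemma mulE_of_of: "mulE (frag_of (a,b)) (frag_of (c,d)) = frag_of (a*c, d*b)" by (simp add: mulE_def)

lemma assocE: fixes x y z :: "('a \<times> 'a) \<Rightarrow>\<^sub>0 int" shows "mulE (mulE x y) z = mulE x (mulE y z)"
proof (rule tri_eq[where F="\<lambda>x y z. mulE (mulE x y) z" and G="\<lambda>x y z. mulE x (mulE y z)"])
  fix a b c :: "'a \<times> 'a"
  show "mulE (mulE (frag_of a) (frag_of b)) (frag_of c) = mulE (frag_of a) (mulE (frag_of b) (frag_of c))"
    by (cases a; cases b; cases c) (simp add: mulE_of_of algebra_simps)
qed (auto intro: additive_mulE1 additive_mulE2 additive_comp[OF additive_mulE1 additive_mulE1]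
        additive_comp[OF additive_mulE1 additive_mulE2] additive_comp[OF additive_mulE2 additive_mulE1]
        additive_comp[OF additive_mulE2 additive_mulE2])

lemma unitT_l: "mulT bar unitT x = x"
proof (rule frag_eq[where f="mulT bar unitT" and g="\<lambda>x. x", OF additive_mulT2 additive_id])
  fix a show "mulT bar unitT (frag_of a) = frag_of a" by (cases a) (simp_all add: mulT_def mulE_def resN_def trN_def weylN_def unitT_def unitE_def frag_extend_add algebra_simps)
qed
lemma unitT_r: "mulT bar x unitT = x"
proof (rule frag_eq[where f="\<lambda>x. mulT bar x unitT" and g="\<lambda>x. x", OF additive_mulT1 additive_id])
  fix a show "mulT bar (frag_of a) unitT = frag_of a" by (cases a) (simp_all add: mulT_def mulE_def resN_def trN_def weylN_def unitT_def unitE_def frag_extend_add algebra_simps)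
qed
lemma unitE_l: fixes x y z :: "('a \<times> 'a) \<Rightarrow>\<^sub>0 int" shows "mulE unitE x = x"
proof (rule frag_eq[where f="mulE unitE" and g="\<lambda>x. x", OF additive_mulE2 additive_id])
  fix a :: "'a \<times> 'a" show "mulE unitE (frag_of a) = frag_of a" by (cases a) (simp_all add: mulT_def mulE_def resN_def trN_def weylN_def unitT_def unitE_def frag_extend_add algebra_simps)
qed
lemma unitE_r: fixes x y z :: "('a \<times> 'a) \<Rightarrow>\<^sub>0 int" shows "mulE x unitE = x"
proof (rule frag_eq[where f="\<lambda>x. mulE x unitE" and g="\<lambda>x. x", OF additive_mulE1 additive_id])
  fix a :: "'a \<times> 'a" show "mulE (frag_of a) unitE = frag_of a" by (cases a) (simp_all add: mulT_def mulE_def resN_def trN_def weylN_def unitT_def unitE_def frag_extend_add algebra_simps)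
qed

lemma res_mul: "resN bar (mulT bar x y) = mulE (resN bar x) (resN bar y)"
proof (rule bi_eq[where F="\<lambda>x y. resN bar (mulT bar x y)" and G="\<lambda>x y. mulE (resN bar x) (resN bar y)"])
  fix a b show "resN bar (mulT bar (frag_of a) (frag_of b)) = mulE (resN bar (frag_of a)) (resN bar (frag_of b))"
    by (cases a; cases b) (simp_all add: mulT_def mulE_def resN_def trN_def weylN_def unitT_def unitE_def frag_extend_add algebra_simps)
qed (auto intro: additive_comp[OF additive_res additive_mulT1] additive_comp[OF additive_res additive_mulT2]
        additive_comp[OF additive_mulE1 additive_res] additive_comp[OF additive_mulE2 additive_res])

lemma weyl_mul: "weylN bar (mulE x y) = mulE (weylN bar x) (weylN bar y)"
proof (rule bi_eq[where F="\<lambda>x y. weylN bar (mulE x y)" and G="\<lambda>x y. mulE (weylN bar x) (weylN bar y)"])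
  fix a b :: "'a \<times> 'a" show "weylN bar (mulE (frag_of a) (frag_of b)) = mulE (weylN bar (frag_of a)) (weylN bar (frag_of b))"
    by (cases a; cases b) (simp_all add: mulT_def mulE_def resN_def trN_def weylN_def unitT_def unitE_def frag_extend_add algebra_simps)
qed (auto intro: additive_comp[OF additive_weyl additive_mulE1] additive_comp[OF additive_weyl additive_mulE2]
        additive_comp[OF additive_mulE1 additive_weyl] additive_comp[OF additive_mulE2 additive_weyl])

lemma frob1: "mulT bar (trN x) y = trN (mulE x (resN bar y))"
proof (rule bi_eq[where F="\<lambda>x y. mulT bar (trN x) y" and G="\<lambda>x y. trN (mulE x (resN bar y))"])
  fix a :: "'a \<times> 'a" and b show "mulT bar (trN (frag_of a)) (frag_of b) = trN (mulE (frag_of a) (resN bar (frag_of b)))"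
    by (cases a; cases b) (simp_all add: mulT_def mulE_def resN_def trN_def weylN_def unitT_def unitE_def frag_extend_add algebra_simps)
qed (auto intro: additive_comp[OF additive_mulT1 additive_tr] additive_mulT2
        additive_comp[OF additive_tr additive_mulE1] additive_comp[OF additive_tr additive_comp[OF additive_mulE2 additive_res]])

lemma frob2: "mulT bar y (trN x) - trN (mulE (resN bar y) x) \<in> KTb"
proof (rule bi_mem[where F="\<lambda>y x. mulT bar y (trN x) - trN (mulE (resN bar y) x)", OF _ _ KT_sub])
  fix g :: "'a topgen" and h :: "'a \<times> 'a"
  show "mulT bar (frag_of g) (trN (frag_of h)) - trN (mulE (resN bar (frag_of g)) (frag_of h)) \<in> KTb"
  proof (cases g)
    case (Br c) then show ?thesis by (cases h) (simp add: KT_0 mulT_def mulE_def resN_def trN_def)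
  next
    case (Sq c d)
    obtain a b where h: "h = (a, b)" by (cases h)
    show ?thesis unfolding Sq h
      by (rule KT_eqI[OF KT_co[of "c * bar b" "bar a * d"]]) (simp_all add: mulT_def mulE_def resN_def trN_def weylN_def unitT_def unitE_def frag_extend_add algebra_simps)
  qed
qed (auto intro: additive_sub additive_comp[OF additive_mulT1] additive_mulT2 additive_tr additive_mulT1
     additive_comp[OF additive_tr additive_comp[OF additive_mulE1 additive_res]]
     additive_comp[OF additive_tr additive_mulE1] additive_comp[OF additive_mulE1 additive_res]
     additive_comp[OF additive_tr additive_mulE2] additive_comp[OF additive_mulT2 additive_tr])


lemma res_unit: "resN bar unitT = unitE" by (simp add: resN_def unitT_def unitE_def)
lemma weyl_unit: "weylN bar unitE = unitE" by (simp add: weylN_def unitE_def)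

lemma green: "c2_green_pres KTb KE (weylN bar) (resN bar) trN (mulT bar) mulE unitT unitE"
proof -
  have b: "biadditive (mulE :: ('a \<times> 'a \<Rightarrow>\<^sub>0 int) \<Rightarrow> _)" by (rule biadd_mulE)
  have w: "\<forall>x\<in>(KE :: ('a \<times> 'a \<Rightarrow>\<^sub>0 int) set). \<forall>y. mulE x y \<in> KE \<and> mulE y x \<in> KE" using mulE_wd by blast
  show ?thesis
  unfolding c2_green_pres_def
  using mackey biadd_mulT b w mulT_wd frob2
  by (simp add: assocT assocE unitT_l unitT_r unitE_l unitE_r res_mul weyl_mul frob1 KT_0 KE_0 res_unit weyl_unit)
qed

lemma extra: "trN unitE - frag_of (Sq 1 1) \<in> KTb
       \<and> mulT bar (frag_of (Sq 1 1)) (frag_of (Sq 1 1)) - (frag_of (Sq 1 1) + frag_of (Sq 1 1)) \<in> KTb"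
  by (simp add: trN_def unitE_def mulT_def KT_0)

end

theorem mainTheorem16:
  fixes bar :: "'a::ring_1 \<Rightarrow> 'a"
  assumes "anti_involution bar"
  shows "c2_mackey_pres (KT bar) (KE :: (('a \<times> 'a) \<Rightarrow>\<^sub>0 int) set) (weylN bar) (resN bar) trN
       \<and> c2_green_pres (KT bar) (KE :: (('a \<times> 'a) \<Rightarrow>\<^sub>0 int) set) (weylN bar) (resN bar) trN
           (mulT bar) mulE unitT unitE
       \<and> trN unitE - frag_of (Sq 1 1) \<in> KT bar
       \<and> mulT bar (frag_of (Sq 1 1)) (frag_of (Sq 1 1)) - (frag_of (Sq 1 1) + frag_of (Sq 1 1)) \<in> KT bar"
proof -
  interpret ainv bar by unfold_locales (rule assms)
  show ?thesis using mackey green extra by blast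
qed

end
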